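(* Let $\mathcal{H}_n$ be an $n$-dimensional Hilbert space, let $F=\{f_i\}_{i=1}^N$ be a frame for $\mathcal{H}_n$, and let $G=\{g_i\}_{i=1}^N$ be a $1$-uniform dual of $F$. Then \[ \sum_{i\neq j} |\langle f_i, g_j\rangle|^2 \;\geq\; n-\frac{n^2}{N}. \]
   Context: A finite sequence $F=\{f_i\}_{i=1}^N$ in $\mathcal{H}_n$ is a frame if there are constants $0<A'\le B'$ with $A'\|f\|^2\le\sum_{i=1}^N|\langle f,f_i\rangle|^2\le B'\|f\|^2$ for all $f\in\mathcal{H}_n$. A sequence $G=\{g_i\}_{i=1}^N$ in $\mathcal{H}_n$ is a dual frame (dual) of $F$ if $f=\sum_{i=1}^N\langle f,f_i\rangle g_i$ for all $f\in\mathcal{H}_n$. A dual $G$ of $F$ is called $1$-uniform if there is a constant $c\in\mathbb{C}$ with $\langle f_i,g_i\rangle=c$ for all $1\le i\le N$. *)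

theory Defs
  imports "HOL-Analysis.Analysis"
begin

text \<open>The n-dimensional Hilbert space H_n is modelled as complex ^ 'n with n = CARD('n),
  with the standard inner product, linear in the first argument.\<close>

definition cinner :: "complex ^ 'n \<Rightarrow> complex ^ 'n \<Rightarrow> complex" where
  "cinner x y = (\<Sum>k\<in>UNIV. x $ k * cnj (y $ k))"

definition is_frame :: "nat \<Rightarrow> (nat \<Rightarrow> complex ^ 'n) \<Rightarrow> bool" where
  "is_frame N f \<longleftrightarrow> (\<exists>A B. 0 < A \<and> A \<le> B \<and>
     (\<forall>x. A * (norm x)^2 \<le> (\<Sum>i=1..N. (cmod (cinner x (f i)))^2) \<and>
          (\<Sum>i=1..N. (cmod (cinner x (f i)))^2) \<le> B * (norm x)^2))"

definition is_dual_frame :: "nat \<Rightarrow> (nat \<Rightarrow> complex ^ 'n) \<Rightarrow> (nat \<Rightarrow> complex ^ 'n) \<Rightarrow> bool" where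
  "is_dual_frame N f g \<longleftrightarrow> (\<forall>x. x = (\<Sum>i=1..N. cinner x (f i) *s g i))"

definition one_uniform_dual :: "nat \<Rightarrow> (nat \<Rightarrow> complex ^ 'n) \<Rightarrow> (nat \<Rightarrow> complex ^ 'n) \<Rightarrow> bool" where
  "one_uniform_dual N f g \<longleftrightarrow> is_dual_frame N f g \<and>
     (\<exists>c. \<forall>i\<in>{1..N}. cinner (f i) (g i) = c)"

end

theory Submission
  imports Defs
begin

lemma cinner_sum_right:
  "cinner x (\<Sum>j\<in>A. a j *s y j) = (\<Sum>j\<in>A. cnj (a j) * cinner x (y j))"
proof -
  have "cinner x (\<Sum>j\<in>A. a j *s y j) = (\<Sum>k\<in>UNIV. \<Sum>j\<in>A. x $ k * (cnj (a j) * cnj (y j $ k)))"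
    unfolding cinner_def by (simp add: sum_component sum_distrib_left)
  also have "... = (\<Sum>j\<in>A. \<Sum>k\<in>UNIV. cnj (a j) * (x $ k * cnj (y j $ k)))"
    by (subst sum.swap) (simp add: mult_ac)
  also have "... = (\<Sum>j\<in>A. cnj (a j) * cinner x (y j))"
    unfolding cinner_def by (simp add: sum_distrib_left)
  finally show ?thesis .
qed

lemma cinner_cnj: "cinner x y = cnj (cinner y x)"
  unfolding cinner_def by (simp add: mult.commute)

lemma trace_lemma:
  fixes f g :: "nat \<Rightarrow> complex ^ 'n"
  assumes "is_dual_frame N f g"
  shows "(\<Sum>i=1..N. cinner (g i) (f i)) = of_nat CARD('n)"
proof -
  have "\<And>k::'n. (axis k 1 :: complex^'n) $ k = (\<Sum>i=1..N. cnj (f i $ k) * g i $ k)"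
  proof -
    fix k :: 'n
    have "(axis k 1 :: complex^'n) = (\<Sum>i=1..N. cinner (axis k 1) (f i) *s g i)"
      using assms unfolding is_dual_frame_def by blast
    then have "(axis k 1 :: complex^'n) $ k = (\<Sum>i=1..N. cinner (axis k 1) (f i) *s g i) $ k"
      by simp
    also have "... = (\<Sum>i=1..N. cnj (f i $ k) * g i $ k)"
      by (simp add: sum_component cinner_def axis_def if_distrib[of "\<lambda>h. h _"] if_distrib[of "\<lambda>a. a * _"] cong: if_cong)
    finally show "(axis k 1 :: complex^'n) $ k = (\<Sum>i=1..N. cnj (f i $ k) * g i $ k)" .
  qed
  then have "\<And>k::'n. (\<Sum>i=1..N. cnj (f i $ k) * g i $ k) = 1" by (simp add: axis_def)
  then have "(\<Sum>k\<in>(UNIV::'n set). \<Sum>i=1..N. cnj (f i $ k) * g i $ k) = of_nat CARD('n)"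
    by simp
  then show ?thesis unfolding cinner_def
    by (subst sum.swap) (simp add: mult.commute)
qed

lemma idem_lemma:
  assumes "is_dual_frame N f g"
  shows "cinner (f i) (g k) = (\<Sum>j=1..N. cinner (f i) (g j) * cinner (f j) (g k))"
proof -
  have "g k = (\<Sum>j=1..N. cinner (g k) (f j) *s g j)"
    using assms unfolding is_dual_frame_def by blast
  then have "cinner (f i) (g k) = cinner (f i) (\<Sum>j=1..N. cinner (g k) (f j) *s g j)"
    by simp
  also have "... = (\<Sum>j=1..N. cinner (f j) (g k) * cinner (f i) (g j))"
    by (simp add: cinner_sum_right cinner_cnj[of "g k"])
  finally show ?thesis by (simp add: mult.commute)
qed

theorem proposition2p6:
  fixes f g :: "nat \<Rightarrow> complex ^ 'n" and N :: nat
  assumes "is_frame N f"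
    and "one_uniform_dual N f g"
  shows "(\<Sum>i\<in>{1..N}. \<Sum>j\<in>{1..N}. if i \<noteq> j then (cmod (cinner (f i) (g j)))^2 else 0)
           \<ge> real CARD('n) - (real CARD('n))^2 / real N"
proof -
  define n where "n = real CARD('n)"
  define Q where "Q = (\<lambda>i j. cinner (f i) (g j))"
  have dual: "is_dual_frame N f g" and "\<exists>c. \<forall>i\<in>{1..N}. cinner (f i) (g i) = c"
    using assms(2) unfolding one_uniform_dual_def by auto
  then obtain c where c: "\<And>i. i \<in> {1..N} \<Longrightarrow> Q i i = c" unfolding Q_def by auto
  have tr: "(\<Sum>i=1..N. Q i i) = of_real n"
  proof -
    have "(\<Sum>i=1..N. Q i i) = cnj (\<Sum>i=1..N. cinner (g i) (f i))"
      unfolding Q_def by (simp add: cinner_cnj[of "f _"])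
    also have "... = of_real n" using arg_cong[OF trace_lemma[OF dual], of cnj] n_def by (simp del: cnj_sum)
    finally show ?thesis .
  qed
  have Npos: "N > 0"
  proof (rule ccontr)
    assume "\<not> N > 0"
    then have "N = 0" by simp
    then have "(\<Sum>i=1..N. Q i i) = 0" by simp
    with tr n_def show False by simp
  qed
  have cval: "of_nat N * c = of_real n"
    using tr c by simp
  then have cabs: "(cmod c)^2 = n^2 / (real N)^2"
  proof -
    have "c = of_real (n / real N)" using cval Npos
      by (simp add: field_simps)
    then show ?thesis by (simp add: power_divide norm_divide)
  qed
  have idem: "\<And>i k. Q i k = (\<Sum>j=1..N. Q i j * Q j k)"
    unfolding Q_def using idem_lemma[OF dual] by blast
  have "of_real n = (\<Sum>i=1..N. \<Sum>j=1..N. Q i j * Q j i)"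
    using tr sum.cong[OF refl, of "{1..N}" "\<lambda>i. Q i i" "\<lambda>i. \<Sum>j=1..N. Q i j * Q j i"] idem by metis
  then have "n = Re (\<Sum>i=1..N. \<Sum>j=1..N. Q i j * Q j i)"
    by (metis Re_complex_of_real)
  also have "... \<le> (\<Sum>i=1..N. \<Sum>j=1..N. cmod (Q i j) * cmod (Q j i))"
  proof -
    have "Re (\<Sum>i=1..N. \<Sum>j=1..N. Q i j * Q j i) \<le> cmod (\<Sum>i=1..N. \<Sum>j=1..N. Q i j * Q j i)"
      by (rule complex_Re_le_cmod)
    also have "... \<le> (\<Sum>i=1..N. cmod (\<Sum>j=1..N. Q i j * Q j i))"
      by (rule norm_sum)
    also have "... \<le> (\<Sum>i=1..N. \<Sum>j=1..N. cmod (Q i j * Q j i))"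
      by (intro sum_mono norm_sum)
    finally show ?thesis by (simp add: norm_mult)
  qed
  also have "... \<le> (\<Sum>i=1..N. \<Sum>j=1..N. ((cmod (Q i j))^2 + (cmod (Q j i))^2) / 2)"
  proof (intro sum_mono)
    fix i j
    have "0 \<le> (cmod (Q i j) - cmod (Q j i))^2" by simp
    then show "cmod (Q i j) * cmod (Q j i) \<le> ((cmod (Q i j))^2 + (cmod (Q j i))^2) / 2"
      by (simp add: power2_eq_square algebra_simps)
  qed
  also have "... = (\<Sum>i=1..N. \<Sum>j=1..N. (cmod (Q i j))^2)"
  proof -
    have "(\<Sum>i=1..N. \<Sum>j=1..N. (cmod (Q j i))^2) = (\<Sum>i=1..N. \<Sum>j=1..N. (cmod (Q i j))^2)"
      by (rule sum.swap)
    then show ?thesis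
      by (simp only: add_divide_distrib sum.distrib sum_divide_distrib[symmetric])
  qed
  also have "... = (\<Sum>i\<in>{1..N}. \<Sum>j\<in>{1..N}. if i \<noteq> j then (cmod (Q i j))^2 else 0)
                   + (\<Sum>i\<in>{1..N}. (cmod (Q i i))^2)"
  proof -
    have "\<And>i. i \<in> {1..N} \<Longrightarrow> (\<Sum>j=1..N. (cmod (Q i j))^2) =
       (\<Sum>j\<in>{1..N}. if i \<noteq> j then (cmod (Q i j))^2 else 0) + (cmod (Q i i))^2"
    proof -
      fix i assume i: "i \<in> {1..N}"
      have "(\<Sum>j=1..N. (cmod (Q i j))^2) = (\<Sum>j\<in>{1..N}. (if i \<noteq> j then (cmod (Q i j))^2 else 0)
           + (if i = j then (cmod (Q i j))^2 else 0))"
        by (intro sum.cong) auto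
      also have "... = (\<Sum>j\<in>{1..N}. if i \<noteq> j then (cmod (Q i j))^2 else 0) + (cmod (Q i i))^2"
        using i by (simp add: sum.distrib sum.delta)
      finally show "(\<Sum>j=1..N. (cmod (Q i j))^2) =
       (\<Sum>j\<in>{1..N}. if i \<noteq> j then (cmod (Q i j))^2 else 0) + (cmod (Q i i))^2" .
    qed
    then show ?thesis by (simp add: sum.distrib)
  qed
  also have "(\<Sum>i\<in>{1..N}. (cmod (Q i i))^2) = n^2 / real N"
  proof -
    have "(\<Sum>i\<in>{1..N}. (cmod (Q i i))^2) = real N * (n^2 / (real N)^2)"
      using c cabs by simp
    also have "... = n^2 / real N" using Npos by (simp add: power2_eq_square)
    finally show ?thesis .
  qed
  finally show ?thesis unfolding n_def Q_def by simp
qed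

end
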